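(* For each $1\le i\le4$, the natural action of $PGL(W)\times PGL(R)$ on $\mathbf F_i$ is free on a nonempty open subset of $\mathbf F_i$.
   Context: Over $\mathbb C$, $V=H^0\mathcal O_{\mathbb P^3}(1)$, $\check V$ its dual, $R$ and $W$ vector spaces of dimensions $3$ and $4$, $\mathbf T=\mathbb P(\mathrm{Hom}(R\otimes V,W))$. $\mathbf F\subset\mathbf T\times\mathbb P(\mathrm{Hom}(W,\check V))\times\mathbb P(\mathrm{Hom}(\check V,W))$ is the subvariety of triples $(\varphi,\psi,\psi')$ such that the composite $R\otimes V\otimes V\to W\otimes V\to\check V\otimes V\to\mathbb C$ induced by $\varphi,\psi$ factors through $R\otimes S^2V$, the composite $R\otimes\check W\otimes\check W\to\check V\otimes\check W\to W\otimes\check W\to\mathbb C$ induced by $\varphi,\psi'$ factors through $R\otimes S^2\check W$, and $\psi'\psi=\lambda1_W$, $\psi\psi'=\mu1_{\check V}$ for some scalars. $\mathbf F_i$ ($1\le i\le3$) is the subset where $\mathrm{rk}\,\psi=i$, $\mathrm{rk}\,\psi'=4-i$; $\mathbf F_4$ is the open subset where $\psi$ is invertible. $PGL(R)$ acts by precomposition on $\varphi$, $PGL(W)$ by composition on $\varphi$, $\psi$ (via inverse) and $\psi'$. *)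

theory Defs
  imports "HOL-Analysis.Analysis"
begin

text \<open>Bases are fixed: R = C^3 (index type 3), V = C^4, its dual with the dual
basis (index type 4), W = C^4 (index type 4).
  phi : R (x) V -> W is given by the family of matrices phi$r : V -> W (rows indexed by W,
        columns by V), r ranging over the basis of R;
  psi : W -> V^ is a 4x4 matrix (rows indexed by the dual basis of V^, columns by W);
  psi' : V^ -> W is a 4x4 matrix (rows indexed by W, columns by the dual basis of V^).
A point of T x P(Hom(W,V^)) x P(Hom(V^,W)) is represented by a triple of nonzero
representatives (a point of the affine cone).\<close>

type_synonym phiT = "complex^4^4^3"
type_synonym matT = "complex^4^4"
type_synonym pt = "phiT \<times> matT \<times> matT"

definition inF :: "pt \<Rightarrow> bool" where
  "inF x = (case x of (phi, psi, psi') \<Rightarrow>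
     phi \<noteq> 0 \<and> psi \<noteq> 0 \<and> psi' \<noteq> 0 \<and>
     (\<forall>r. transpose (psi ** (phi$r)) = psi ** (phi$r)) \<and>
     (\<forall>r. transpose (psi' ** transpose (phi$r)) = psi' ** transpose (phi$r)) \<and>
     (\<exists>l. psi' ** psi = mat l) \<and>
     (\<exists>m. psi ** psi' = mat m))"

definition inFi :: "nat \<Rightarrow> pt \<Rightarrow> bool" where
  "inFi i x = (case x of (phi, psi, psi') \<Rightarrow>
     inF x \<and>
     (if i = 4 then invertible psi
      else rank psi = i \<and> rank psi' = 4 - i))"

inductive_set polys :: "('x \<Rightarrow> complex) set \<Rightarrow> ('x \<Rightarrow> complex) set" for C where
  const: "(\<lambda>_. c) \<in> polys C"
| coord: "f \<in> C \<Longrightarrow> f \<in> polys C"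
| add: "f \<in> polys C \<Longrightarrow> g \<in> polys C \<Longrightarrow> (\<lambda>x. f x + g x) \<in> polys C"
| mult: "f \<in> polys C \<Longrightarrow> g \<in> polys C \<Longrightarrow> (\<lambda>x. f x * g x) \<in> polys C"

definition pt_coords :: "(pt \<Rightarrow> complex) set" where
  "pt_coords =
     {(\<lambda>x. fst x $ r $ w $ v) | r w v. True} \<union>
     {(\<lambda>x. fst (snd x) $ i $ j) | i j. True} \<union>
     {(\<lambda>x. snd (snd x) $ i $ j) | i j. True}"

definition zariski_open :: "pt set \<Rightarrow> bool" where
  "zariski_open U = (\<exists>S \<subseteq> polys pt_coords. U = - {x. \<forall>p\<in>S. p x = 0})"

definition sc3 :: "complex \<Rightarrow> phiT \<Rightarrow> phiT" where
  "sc3 c phi = (\<chi> r i j. c * phi$r$i$j)"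
definition sc2 :: "complex \<Rightarrow> matT \<Rightarrow> matT" where
  "sc2 c A = (\<chi> i j. c * A$i$j)"

text \<open>Action of g in GL(R) by precomposition: (phi o (g (x) 1_V))_r = sum_s g_{s r} phi_s,
and of h in GL(W): phi |-> h phi, psi |-> psi h^{-1}, psi' |-> h psi'.\<close>
definition actR :: "complex^3^3 \<Rightarrow> phiT \<Rightarrow> phiT" where
  "actR g phi = (\<chi> r i j. \<Sum>s\<in>UNIV. g$s$r * phi$s$i$j)"
definition actW :: "matT \<Rightarrow> pt \<Rightarrow> pt" where
  "actW h x = (case x of (phi, psi, psi') \<Rightarrow>
      ((\<chi> r. h ** (phi$r)), psi ** matrix_inv h, h ** psi'))"

text \<open>The element ([h],[g]) of PGL(W) x PGL(R) fixes the point of the multiprojective space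
represented by x.\<close>
definition fixes_pt :: "matT \<Rightarrow> complex^3^3 \<Rightarrow> pt \<Rightarrow> bool" where
  "fixes_pt h g x = (case x of (phi, psi, psi') \<Rightarrow>
     (case actW h (actR g phi, psi, psi') of (phi1, psi1, psi1') \<Rightarrow>
       (\<exists>c. c \<noteq> 0 \<and> phi1 = sc3 c phi) \<and>
       (\<exists>d. d \<noteq> 0 \<and> psi1 = sc2 d psi) \<and>
       (\<exists>e. e \<noteq> 0 \<and> psi1' = sc2 e psi')))"

definition free_at :: "pt \<Rightarrow> bool" where
  "free_at x = (\<forall>(h::matT) (g::complex^3^3). invertible h \<and> invertible g \<and> fixes_pt h g x
                  \<longrightarrow> (\<exists>a. h = mat a) \<and> (\<exists>b. g = mat b))"

end

theory Submission
  imports Defs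
begin

lemma polys_sum: "finite A \<Longrightarrow> (\<And>j. j \<in> A \<Longrightarrow> f j \<in> polys C) \<Longrightarrow> (\<lambda>x. \<Sum>j\<in>A. f j x) \<in> polys C"
proof (induction A rule: finite_induct)
  case empty show ?case using polys.const[of 0 C] by simp
next
  case (insert a A) then show ?case using polys.add[of "f a" C] by simp
qed

lemma polys_prod: "finite A \<Longrightarrow> (\<And>j. j \<in> A \<Longrightarrow> f j \<in> polys C) \<Longrightarrow> (\<lambda>x. \<Prod>j\<in>A. f j x) \<in> polys C"
proof (induction A rule: finite_induct)
  case empty show ?case using polys.const[of 1 C] by simp
next
  case (insert a A) then show ?case using polys.mult[of "f a" C] by simp
qed

lemma polys_det: "(\<And>i j. (\<lambda>x. A x $ i $ j) \<in> polys C) \<Longrightarrow> (\<lambda>x. det (A x)) \<in> polys C"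
  unfolding det_def
  apply (rule polys_sum[where f="\<lambda>p x. of_int (sign p) * (\<Prod>i\<in>UNIV. A x $ i $ p i)", simplified])
   apply simp
  apply (rule polys.mult[OF polys.const])
  apply (rule polys_prod[where f="\<lambda>i x. A x $ i $ _ i", simplified])
  apply simp
  done

lemma c_phi: "(\<lambda>x. fst x $ r $ w $ v) \<in> polys pt_coords"
  apply (rule polys.coord) unfolding pt_coords_def by blast
lemma c_psi: "(\<lambda>x. fst (snd x) $ r $ w) \<in> polys pt_coords"
  apply (rule polys.coord) unfolding pt_coords_def by blast
lemma c_psi': "(\<lambda>x. snd (snd x) $ r $ w) \<in> polys pt_coords"
  apply (rule polys.coord) unfolding pt_coords_def by blast

lemma zo: "p \<in> polys pt_coords \<Longrightarrow> zariski_open {x. p x \<noteq> 0}"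
  unfolding zariski_open_def by (rule exI[of _ "{p}"]) auto

lemma mat_left_entry: "(mat c ** A) $ i $ j = c * A$i$j"
  by (simp add: matrix_matrix_mult_def mat_def if_distrib if_distribR sum.delta cong: if_cong)
lemma mat_right_entry: "(A ** mat c) $ i $ j = A$i$j * c"
  by (simp add: matrix_matrix_mult_def mat_def if_distrib if_distribR sum.delta' cong: if_cong)
lemma mat_comm: "mat c ** (A::'a::comm_semiring_1^'n^'n) = A ** mat c"
  by (simp add: vec_eq_iff mat_left_entry mat_right_entry mult.commute)
lemma mat_mat: "mat a ** mat b = (mat (a*b) :: 'a::comm_semiring_1^'n^'n)"
  by (simp add: vec_eq_iff mat_left_entry) (simp add: mat_def)
lemma sc2_eq: "sc2 c A = mat c ** A"
  by (simp add: sc2_def vec_eq_iff mat_left_entry)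

lemma actR_mult: "A ** (actR g phi $ r) = (\<chi> p q. \<Sum>s\<in>UNIV. g$s$r * (A ** phi$s)$p$q)"
proof -
  have "(\<Sum>k\<in>UNIV. A$p$k * (\<Sum>s\<in>UNIV. g$s$r * phi$s$k$q)) = (\<Sum>s\<in>UNIV. g$s$r * (\<Sum>k\<in>UNIV. A$p$k * phi$s$k$q))" for p q
  proof -
    have "(\<Sum>k\<in>UNIV. A$p$k * (\<Sum>s\<in>UNIV. g$s$r * phi$s$k$q)) = (\<Sum>k\<in>UNIV. \<Sum>s\<in>UNIV. g$s$r * (A$p$k * phi$s$k$q))"
      by (simp add: sum_distrib_left mult_ac)
    also have "\<dots> = (\<Sum>s\<in>UNIV. \<Sum>k\<in>UNIV. g$s$r * (A$p$k * phi$s$k$q))"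
      by (rule sum.swap)
    also have "\<dots> = (\<Sum>s\<in>UNIV. g$s$r * (\<Sum>k\<in>UNIV. A$p$k * phi$s$k$q))"
      by (simp add: sum_distrib_left)
    finally show ?thesis .
  qed
  then show ?thesis by (simp add: vec_eq_iff actR_def matrix_matrix_mult_def)
qed

lemma actR_multT: "A ** transpose (actR g phi $ r) = (\<chi> p q. \<Sum>s\<in>UNIV. g$s$r * (A ** transpose (phi$s))$p$q)"
proof -
  have "(\<Sum>k\<in>UNIV. A$p$k * (\<Sum>s\<in>UNIV. g$s$r * phi$s$q$k)) = (\<Sum>s\<in>UNIV. g$s$r * (\<Sum>k\<in>UNIV. A$p$k * phi$s$q$k))" for p q
  proof -
    have "(\<Sum>k\<in>UNIV. A$p$k * (\<Sum>s\<in>UNIV. g$s$r * phi$s$q$k)) = (\<Sum>k\<in>UNIV. \<Sum>s\<in>UNIV. g$s$r * (A$p$k * phi$s$q$k))"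
      by (simp add: sum_distrib_left mult_ac)
    also have "\<dots> = (\<Sum>s\<in>UNIV. \<Sum>k\<in>UNIV. g$s$r * (A$p$k * phi$s$q$k))"
      by (rule sum.swap)
    also have "\<dots> = (\<Sum>s\<in>UNIV. g$s$r * (\<Sum>k\<in>UNIV. A$p$k * phi$s$q$k))"
      by (simp add: sum_distrib_left)
    finally show ?thesis .
  qed
  then show ?thesis by (simp add: vec_eq_iff actR_def matrix_matrix_mult_def transpose_def)
qed

lemma actR_mat: "actR (mat l) phi $ r = mat l ** phi $ r"
  by (simp add: vec_eq_iff actR_def mat_left_entry) (simp add: mat_def if_distrib if_distribR sum.delta cong: if_cong)

lemma inv_props: assumes "invertible A" shows "matrix_inv A ** A = mat 1 \<and> A ** matrix_inv A = mat 1"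
proof -
  from assms have "\<exists>A'. A ** A' = mat 1 \<and> A' ** A = mat 1" by (simp add: invertible_def)
  from someI_ex[OF this] show ?thesis unfolding matrix_inv_def by blast
qed

definition Mpos :: "4 \<Rightarrow> 4 \<Rightarrow> (3 \<Rightarrow> matT) \<Rightarrow> complex^3^3" where
  "Mpos a b X = (\<chi> k s. if k = 1 then X s $ a $ a else if k = 2 then X s $ a $ b else X s $ b $ b)"

lemma g_scalar:
  assumes "det (Mpos a b X) \<noteq> 0"
    and "\<And>r p q. (\<Sum>s\<in>UNIV. g$s$r * X s $p$q) = l * X r $p$q"
  shows "g = mat l"
proof -
  let ?M = "Mpos a b X"
  have e: "(?M ** g)$k$r = (?M ** mat l)$k$r" for k r
  proof -
    have "(?M ** g)$k$r = (\<Sum>s\<in>UNIV. g$s$r * ?M$k$s)"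
      by (simp add: matrix_matrix_mult_def mult.commute)
    also have "\<dots> = l * ?M$k$r"
      by (cases "k=1"; cases "k=2") (simp_all add: Mpos_def assms(2))
    finally show ?thesis by (simp add: mat_right_entry mult.commute)
  qed
  have eq: "?M ** g = ?M ** mat l" using e by (simp add: vec_eq_iff)
  obtain M' where M': "M' ** ?M = mat 1"
    using assms(1) invertible_det_nz[of ?M] unfolding invertible_def by blast
  have "g = (M' ** ?M) ** g" using M' by simp
  also have "\<dots> = M' ** (?M ** g)" by (simp only: matrix_mul_assoc)
  also have "\<dots> = M' ** (?M ** mat l)" by (simp only: eq)
  also have "\<dots> = (M' ** ?M) ** mat l" by (simp only: matrix_mul_assoc)
  also have "\<dots> = mat l" using M' by simp
  finally show ?thesis .
qed


lemma h_scalar: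
  fixes P h :: matT
  assumes "invertible P" "h ** (mat l ** P) = mat c ** P" "l \<noteq> 0"
  shows "h = mat (c / l)"
proof -
  obtain P' where P': "P ** P' = mat 1" using assms(1) unfolding invertible_def by blast
  have "h ** (mat l ** P) = mat l ** (h ** P)"
    by (simp only: matrix_mul_assoc mat_comm[of l h])
  then have "mat l ** (h ** P) = mat c ** P" using assms(2) by simp
  then have "mat (1/l) ** (mat l ** (h ** P)) = mat (1/l) ** (mat c ** P)" by simp
  then have "(mat (1/l) ** mat l) ** (h ** P) = (mat (1/l) ** mat c) ** P"
    by (simp only: matrix_mul_assoc)
  then have hp: "h ** P = mat (c/l) ** P"
    using assms(3) by (simp add: mat_mat)
  have "h = h ** (P ** P')" using P' by simp
  also have "\<dots> = (h ** P) ** P'" by (simp only: matrix_mul_assoc)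
  also have "\<dots> = (mat (c/l) ** P) ** P'" by (simp only: hp)
  also have "\<dots> = mat (c/l)" using P' by (simp flip: matrix_mul_assoc)
  finally show ?thesis .
qed

lemma fix_unfold:
  assumes "fixes_pt h g (phi, psi, psi')"
  obtains c d e where "c \<noteq> 0" "d \<noteq> 0" "e \<noteq> 0"
    "\<And>r. h ** (actR g phi $ r) = mat c ** phi $ r"
    "psi ** matrix_inv h = mat d ** psi"
    "h ** psi' = mat e ** psi'"
proof -
  from assms obtain c d e where c: "c \<noteq> 0" "(\<chi> r. h ** (actR g phi $ r)) = sc3 c phi"
    and d: "d \<noteq> 0" "psi ** matrix_inv h = sc2 d psi"
    and e: "e \<noteq> 0" "h ** psi' = sc2 e psi'"
    unfolding fixes_pt_def actW_def by auto
  have *: "h ** (actR g phi $ r) = mat c ** phi $ r" for r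
  proof -
    have "(\<chi> r. h ** (actR g phi $ r)) $ r = sc3 c phi $ r" using c(2) by simp
    then show ?thesis by (simp add: sc3_def vec_eq_iff mat_left_entry)
  qed
  show ?thesis
    using that[of c d e] c d e * by (simp add: sc2_eq)
qed

definition US :: "pt set" where
  "US = {x. det (fst x $ 1) * det (Mpos 1 2 (\<lambda>s. fst (snd x) ** fst x $ s)) \<noteq> 0}"
definition UT :: "pt set" where
  "UT = {x. det (fst x $ 1) * det (Mpos 2 3 (\<lambda>s. snd (snd x) ** transpose (fst x $ s))) \<noteq> 0}"

lemma free_S:
  assumes "(phi, psi, psi') \<in> US"
  shows "free_at (phi, psi, psi')"
  unfolding free_at_def
proof (intro allI impI)
  fix h :: matT and g :: "complex^3^3"
  assume a: "invertible h \<and> invertible g \<and> fixes_pt h g (phi, psi, psi')"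
  have d1: "det (phi $ 1) \<noteq> 0" and d2: "det (Mpos 1 2 (\<lambda>s. psi ** phi $ s)) \<noteq> 0"
    using assms by (auto simp: US_def)
  obtain c d e where cde: "c \<noteq> 0" "d \<noteq> 0" "e \<noteq> 0"
    and eqr: "\<And>r. h ** (actR g phi $ r) = mat c ** phi $ r"
    and eqd: "psi ** matrix_inv h = mat d ** psi"
    and eqe: "h ** psi' = mat e ** psi'"
    by (rule fix_unfold[OF conjunct2[OF conjunct2[OF a]]], blast)
  have hinv: "matrix_inv h ** h = mat 1" using inv_props a by blast
  have "psi = psi ** (matrix_inv h ** h)" using hinv by simp
  also have "\<dots> = (psi ** matrix_inv h) ** h" by (simp only: matrix_mul_assoc)
  also have "\<dots> = mat d ** (psi ** h)" by (simp only: eqd matrix_mul_assoc)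
  finally have ps: "psi = mat d ** (psi ** h)" .
  have "mat (1/d) ** psi = mat (1/d) ** (mat d ** (psi ** h))" using ps by (rule arg_cong)
  also have "\<dots> = (mat (1/d) ** mat d) ** (psi ** h)" by (simp only: matrix_mul_assoc)
  finally have psih: "psi ** h = mat (1/d) ** psi" using cde by (simp add: mat_mat)
  have key: "(\<Sum>s\<in>UNIV. g$s$r * (psi ** phi$s)$p$q) = (c*d) * (psi ** phi$r)$p$q" for r p q
  proof -
    have "psi ** (h ** actR g phi $ r) = psi ** (mat c ** phi $ r)" by (simp add: eqr)
    then have "(psi ** h) ** actR g phi $ r = mat c ** (psi ** phi $ r)"
      by (simp only: matrix_mul_assoc mat_comm[of c psi])
    then have "mat (1/d) ** (psi ** actR g phi $ r) = mat c ** (psi ** phi $ r)"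
      by (simp add: psih matrix_mul_assoc)
    then have "(mat (1/d) ** (psi ** actR g phi $ r)) $ p $ q = (mat c ** (psi ** phi $ r)) $ p $ q"
      by simp
    then have "(1/d) * (\<Sum>s\<in>UNIV. g$s$r * (psi ** phi$s)$p$q) = c * (psi ** phi$r)$p$q"
      by (simp add: mat_left_entry actR_mult)
    then have "d * ((1/d) * (\<Sum>s\<in>UNIV. g$s$r * (psi ** phi$s)$p$q)) = d * (c * (psi ** phi$r)$p$q)"
      by (rule arg_cong)
    then show ?thesis using cde(2) by (simp only: mult.assoc[symmetric] mult.commute[of c d] right_inverse_eq divide_inverse) simp
  qed
  have g: "g = mat (c*d)" by (rule g_scalar[OF d2]) (rule key)
  have "h ** (mat (c*d) ** phi $ 1) = mat c ** phi $ 1" using eqr[of 1] by (simp add: g actR_mat)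
  moreover have "invertible (phi $ 1)" using d1 invertible_det_nz by blast
  moreover have "c * d \<noteq> 0" using cde by simp
  ultimately have "h = mat (c / (c*d))" by (intro h_scalar)
  then show "(\<exists>a. h = mat a) \<and> (\<exists>b. g = mat b)" using g by blast
qed


lemma free_T:
  assumes "(phi, psi, psi') \<in> UT" and F: "inF (phi, psi, psi')"
  shows "free_at (phi, psi, psi')"
  unfolding free_at_def
proof (intro allI impI)
  fix h :: matT and g :: "complex^3^3"
  assume a: "invertible h \<and> invertible g \<and> fixes_pt h g (phi, psi, psi')"
  have d1: "det (phi $ 1) \<noteq> 0" and d2: "det (Mpos 2 3 (\<lambda>s. psi' ** transpose (phi $ s))) \<noteq> 0"
    using assms(1) by (auto simp: UT_def)
  have sym: "\<And>r. transpose (psi' ** transpose (phi$r)) = psi' ** transpose (phi$r)"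
    using F by (simp add: inF_def)
  obtain c d e where cde: "c \<noteq> 0" "d \<noteq> 0" "e \<noteq> 0"
    and eqr: "\<And>r. h ** (actR g phi $ r) = mat c ** phi $ r"
    and eqd: "psi ** matrix_inv h = mat d ** psi"
    and eqe: "h ** psi' = mat e ** psi'"
    by (rule fix_unfold[OF conjunct2[OF conjunct2[OF a]]], blast)
  define hi where "hi = matrix_inv h"
  have hinv: "hi ** h = mat 1" using inv_props a unfolding hi_def by blast
  have Y: "actR g phi $ r = hi ** (mat c ** phi $ r)" for r
  proof -
    have "actR g phi $ r = (hi ** h) ** actR g phi $ r" using hinv by simp
    also have "\<dots> = hi ** (h ** actR g phi $ r)" by (simp only: matrix_mul_assoc)
    also have "\<dots> = hi ** (mat c ** phi $ r)" by (simp only: eqr)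
    finally show ?thesis .
  qed
  have "psi' = (hi ** h) ** psi'" using hinv by simp
  also have "\<dots> = hi ** (mat e ** psi')" by (simp only: eqe flip: matrix_mul_assoc)
  also have "\<dots> = mat e ** (hi ** psi')" by (simp only: matrix_mul_assoc mat_comm[of e hi])
  finally have ps: "psi' = mat e ** (hi ** psi')" .
  have "mat (1/e) ** psi' = mat (1/e) ** (mat e ** (hi ** psi'))" using ps by (rule arg_cong)
  also have "\<dots> = (mat (1/e) ** mat e) ** (hi ** psi')" by (simp only: matrix_mul_assoc)
  finally have hipsi: "hi ** psi' = mat (1/e) ** psi'" using cde by (simp add: mat_mat)
  have key: "(\<Sum>s\<in>UNIV. g$s$r * (psi' ** transpose (phi$s))$p$q) = (c/e) * (psi' ** transpose (phi$r))$p$q" for r p q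
  proof -
    let ?T = "psi' ** transpose (phi$r)"
    have "?T ** transpose hi = transpose ?T ** transpose hi" by (simp only: sym)
    also have "\<dots> = transpose (hi ** ?T)" by (simp only: matrix_transpose_mul)
    also have "\<dots> = transpose ((hi ** psi') ** transpose (phi$r))" by (simp only: matrix_mul_assoc)
    also have "\<dots> = transpose (mat (1/e) ** ?T)" by (simp only: hipsi matrix_mul_assoc)
    also have "\<dots> = transpose ?T ** mat (1/e)" by (simp only: matrix_transpose_mul transpose_mat)
    also have "\<dots> = ?T ** mat (1/e)" by (simp only: sym)
    finally have tt: "?T ** transpose hi = ?T ** mat (1/e)" .
    have "psi' ** transpose (actR g phi $ r) = psi' ** transpose (hi ** (mat c ** phi $ r))" by (simp only: Y)
    also have "\<dots> = psi' ** ((transpose (phi $ r) ** mat c) ** transpose hi)"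
      by (simp only: matrix_transpose_mul transpose_mat)
    also have "\<dots> = (?T ** mat c) ** transpose hi" by (simp only: matrix_mul_assoc)
    also have "\<dots> = (mat c ** ?T) ** transpose hi" by (simp only: mat_comm)
    also have "\<dots> = mat c ** (?T ** transpose hi)" by (simp only: matrix_mul_assoc)
    also have "\<dots> = mat c ** (?T ** mat (1/e))" by (simp only: tt)
    finally have "(psi' ** transpose (actR g phi $ r)) $ p $ q = (mat c ** (?T ** mat (1/e))) $ p $ q"
      by simp
    then show ?thesis by (simp add: actR_multT mat_left_entry mat_right_entry)
  qed
  have g: "g = mat (c/e)" by (rule g_scalar[OF d2]) (rule key)
  have "h ** (mat (c/e) ** phi $ 1) = mat c ** phi $ 1" using eqr[of 1] by (simp add: g actR_mat)
  moreover have "invertible (phi $ 1)" using d1 invertible_det_nz by blast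
  moreover have "c / e \<noteq> 0" using cde by simp
  ultimately have "h = mat (c / (c/e))" by (intro h_scalar)
  then show "(\<exists>a. h = mat a) \<and> (\<exists>b. g = mat b)" using g by blast
qed


lemma Mpos_poly:
  assumes "\<And>s p q. (\<lambda>x. X x s $ p $ q) \<in> polys C"
  shows "(\<lambda>x. Mpos a b (X x) $ k $ s) \<in> polys C"
  by (cases "k = 1"; cases "k = 2") (simp_all add: Mpos_def assms)

lemma mult_poly:
  assumes "\<And>i j. (\<lambda>x. A x $ i $ j) \<in> polys C" "\<And>i j. (\<lambda>x. B x $ i $ j) \<in> polys C"
  shows "(\<lambda>x. (A x ** B x) $ i $ j) \<in> polys C"
  unfolding matrix_matrix_mult_def
  by (simp, rule polys_sum, simp, rule polys.mult, rule assms(1), rule assms(2))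

lemma US_open: "zariski_open US"
  unfolding US_def
  apply (rule zo)
  apply (rule polys.mult)
   apply (rule polys_det, rule c_phi)
  apply (rule polys_det, rule Mpos_poly, rule mult_poly, rule c_psi, rule c_phi)
  done

lemma UT_open: "zariski_open UT"
  unfolding UT_def
  apply (rule zo)
  apply (rule polys.mult)
   apply (rule polys_det, rule c_phi)
  apply (rule polys_det, rule Mpos_poly, rule mult_poly, rule c_psi')
  apply (simp add: transpose_def, rule c_phi)
  done


definition diagM :: "4 set \<Rightarrow> matT" where
  "diagM A = (\<chi> x y. if x = y \<and> x \<in> A then 1 else 0)"

definition phiE :: "4 \<Rightarrow> 4 \<Rightarrow> phiT" where
  "phiE a b = (\<chi> r x y. if r = 1 then (if x = y then 1 else 0)
      else if r = 2 then (if x = a \<and> y = a then 1 else 0)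
      else (if (x = a \<and> y = b) \<or> (x = b \<and> y = a) then 1 else 0))"

lemma diag_mult: "diagM A ** X = (\<chi> x y. if x \<in> A then X$x$y else 0)"
  by (simp add: vec_eq_iff diagM_def matrix_matrix_mult_def if_distrib if_distribR sum.delta cong: if_cong)

lemma diag_diag: "diagM A ** diagM B = diagM (A \<inter> B)"
  by (simp add: diag_mult vec_eq_iff) (simp add: diagM_def)

lemma diag_UNIV: "diagM UNIV = mat 1"
  by (simp add: diagM_def mat_def)

lemma diag_empty: "diagM {} = mat 0"
  by (simp add: diagM_def mat_def)

lemma diag_empty0: "diagM {} = 0"
  by (simp add: diag_empty)

lemma diag_nz: "a \<in> A \<Longrightarrow> diagM A \<noteq> 0"
proof
  assume "a \<in> A" "diagM A = 0"
  then have "diagM A $ a $ a = 0" by simp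
  then show False using \<open>a \<in> A\<close> by (simp add: diagM_def)
qed

lemma phiE_1: "phiE a b $ 1 = mat 1"
  by (simp add: phiE_def mat_def vec_eq_iff)

lemma phiE_1_det: "det (phiE a b $ 1) = 1"
  by (simp add: phiE_1)

lemma ex_mat0: "\<exists>l. (mat l :: matT) = 0"
  by (rule exI[of _ 0]) simp

lemma phiE_nz: "phiE a b \<noteq> 0"
proof
  assume "phiE a b = 0"
  then have "phiE a b $ 1 $ 1 $ 1 = 0" by simp
  then show False by (simp add: phiE_def)
qed

lemma rank_diag: "rank (diagM A) = card A"
proof -
  let ?B = "(\<lambda>i. axis i (1::complex)) ` A"
  have r: "row i (diagM A) = (if i \<in> A then axis i 1 else 0)" for i
    by (auto simp: row_def diagM_def vec_eq_iff axis_def)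
  have rows: "rows (diagM A) \<subseteq> insert 0 ?B"
    unfolding rows_def using r by auto
  have B: "?B \<subseteq> rows (diagM A)"
  proof
    fix v assume "v \<in> ?B"
    then obtain i where i: "i \<in> A" "v = axis i 1" by blast
    then have "v = row i (diagM A)"
      by (auto simp: row_def diagM_def vec_eq_iff axis_def)
    then show "v \<in> rows (diagM A)" by (auto simp: rows_def)
  qed
  have ind: "vec.independent ?B"
    by (rule vec.independent_mono[OF independent_cart_basis]) (auto simp: cart_basis_def)
  have sp: "rows (diagM A) \<subseteq> vec.span ?B"
    using rows vec.span_zero vec.span_base by blast
  have "card ?B = vec.dim (rows (diagM A))"
    by (rule vec.basis_card_eq_dim[OF B sp ind])
  moreover have "card ?B = card A"
    by (rule card_image) (auto simp: inj_on_def axis_eq_axis)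
  ultimately show ?thesis by (simp add: row_rank_def_gen)
qed


lemma ex1: "inFi 1 (phiE 2 3, diagM {1}, diagM {2,3,4}) \<and> (phiE 2 3, diagM {1}, diagM {2,3,4}) \<in> UT"
proof -
  have s1: "\<forall>r. transpose (diagM {1} ** phiE 2 3 $ r) = diagM {1} ** phiE 2 3 $ r"
    by (simp add: diag_mult transpose_def vec_eq_iff phiE_def forall_4 forall_3)
  have s2: "\<forall>r. transpose (diagM {2,3,4} ** transpose (phiE 2 3 $ r)) = diagM {2,3,4} ** transpose (phiE 2 3 $ r)"
    by (simp add: diag_mult transpose_def vec_eq_iff phiE_def forall_4 forall_3)
  have p1: "diagM {2,3,4} ** diagM {1} = mat 0" by (simp add: diag_diag diag_empty0)
  have p2: "diagM {1} ** diagM {2,3,4} = mat 0" by (simp add: diag_diag diag_empty0)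
  have F: "inF (phiE 2 3, diagM {1}, diagM {2,3,4})"
    unfolding inF_def using s1 s2 p1 p2 phiE_nz ex_mat0 diag_nz[of 1 "{1}"] diag_nz[of 2 "{2,3,4}"] by auto
  have r: "rank (diagM {1}) = 1" "rank (diagM {2,3,4}) = 3" by (simp_all add: rank_diag)
  have u: "(phiE 2 3, diagM {1}, diagM {2,3,4}) \<in> UT"
    by (simp only: UT_def mem_Collect_eq fst_conv snd_conv phiE_1_det) (simp add: det_3 Mpos_def diag_mult transpose_def phiE_def)
  show ?thesis using F r u by (simp add: inFi_def)
qed

lemma ex2: "inFi 2 (phiE 1 2, diagM {1,2}, diagM {3,4}) \<and> (phiE 1 2, diagM {1,2}, diagM {3,4}) \<in> US"
proof -
  have s1: "\<forall>r. transpose (diagM {1,2} ** phiE 1 2 $ r) = diagM {1,2} ** phiE 1 2 $ r"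
    by (simp add: diag_mult transpose_def vec_eq_iff phiE_def forall_4 forall_3)
  have s2: "\<forall>r. transpose (diagM {3,4} ** transpose (phiE 1 2 $ r)) = diagM {3,4} ** transpose (phiE 1 2 $ r)"
    by (simp add: diag_mult transpose_def vec_eq_iff phiE_def forall_4 forall_3)
  have p1: "diagM {3,4} ** diagM {1,2} = mat 0" by (simp add: diag_diag diag_empty0)
  have p2: "diagM {1,2} ** diagM {3,4} = mat 0" by (simp add: diag_diag diag_empty0)
  have F: "inF (phiE 1 2, diagM {1,2}, diagM {3,4})"
    unfolding inF_def using s1 s2 p1 p2 phiE_nz ex_mat0 diag_nz[of 1 "{1,2}"] diag_nz[of 3 "{3,4}"] by auto
  have r: "rank (diagM {1,2}) = 2" "rank (diagM {3,4}) = 2" by (simp_all add: rank_diag)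
  have u: "(phiE 1 2, diagM {1,2}, diagM {3,4}) \<in> US"
    by (simp only: US_def mem_Collect_eq fst_conv snd_conv phiE_1_det) (simp add: det_3 Mpos_def diag_mult phiE_def)
  show ?thesis using F r u by (simp add: inFi_def)
qed

lemma ex3: "inFi 3 (phiE 1 2, diagM {1,2,3}, diagM {4}) \<and> (phiE 1 2, diagM {1,2,3}, diagM {4}) \<in> US"
proof -
  have s1: "\<forall>r. transpose (diagM {1,2,3} ** phiE 1 2 $ r) = diagM {1,2,3} ** phiE 1 2 $ r"
    by (simp add: diag_mult transpose_def vec_eq_iff phiE_def forall_4 forall_3)
  have s2: "\<forall>r. transpose (diagM {4} ** transpose (phiE 1 2 $ r)) = diagM {4} ** transpose (phiE 1 2 $ r)"
    by (simp add: diag_mult transpose_def vec_eq_iff phiE_def forall_4 forall_3)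
  have p1: "diagM {4} ** diagM {1,2,3} = mat 0" by (simp add: diag_diag diag_empty0)
  have p2: "diagM {1,2,3} ** diagM {4} = mat 0" by (simp add: diag_diag diag_empty0)
  have F: "inF (phiE 1 2, diagM {1,2,3}, diagM {4})"
    unfolding inF_def using s1 s2 p1 p2 phiE_nz ex_mat0 diag_nz[of 1 "{1,2,3}"] diag_nz[of 4 "{4}"] by auto
  have r: "rank (diagM {1,2,3}) = 3" "rank (diagM {4}) = 1" by (simp_all add: rank_diag)
  have u: "(phiE 1 2, diagM {1,2,3}, diagM {4}) \<in> US"
    by (simp only: US_def mem_Collect_eq fst_conv snd_conv phiE_1_det) (simp add: det_3 Mpos_def diag_mult phiE_def)
  show ?thesis using F r u by (simp add: inFi_def)
qed

lemma ex4: "inFi 4 (phiE 1 2, mat 1, mat 1) \<and> (phiE 1 2, mat 1, mat 1) \<in> US"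
proof -
  have s1: "\<forall>r. transpose (phiE 1 2 $ r) = phiE 1 2 $ r"
    by (simp add: transpose_def vec_eq_iff phiE_def forall_4 forall_3)
  have nz: "(mat 1 :: matT) \<noteq> 0" using diag_nz[of 1 UNIV] by (simp add: diag_UNIV)
  have F: "inF (phiE 1 2, mat 1, mat 1)"
    unfolding inF_def using s1 phiE_nz nz by auto
  have i: "invertible (mat 1 :: matT)" unfolding invertible_def by auto
  have u: "(phiE 1 2, mat 1, mat 1) \<in> US"
    by (simp only: US_def mem_Collect_eq fst_conv snd_conv phiE_1_det) (simp add: det_3 Mpos_def phiE_def)
  show ?thesis using F i u by (simp add: inFi_def)
qed

theorem mainTheorem8:
  fixes i :: nat
  assumes "1 \<le> i" and "i \<le> 4"
  shows "\<exists>U. zariski_open U \<and> {x. inFi i x} \<inter> U \<noteq> {} \<and>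
             (\<forall>x \<in> {x. inFi i x} \<inter> U. free_at x)"
proof -
  have cases: "i = 1 \<or> i = 2 \<or> i = 3 \<or> i = 4" using assms by auto
  have fS: "\<forall>x \<in> {x. inFi i x} \<inter> US. free_at x"
    using free_S by auto
  show ?thesis
  proof (cases "i = 1")
    case True
    have "\<forall>x \<in> {x. inFi i x} \<inter> UT. free_at x"
    proof
      fix x assume "x \<in> {x. inFi i x} \<inter> UT"
      moreover obtain phi psi psi' where "x = (phi, psi, psi')" by (cases x)
      ultimately show "free_at x" using free_T by (auto simp: inFi_def)
    qed
    then show ?thesis using True ex1 UT_open by blast
  next
    case False
    then have "i = 2 \<or> i = 3 \<or> i = 4" using cases by auto
    then show ?thesis using fS ex2 ex3 ex4 US_open by blast
  qed
qed

end
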